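(* Let $k$ be a natural number and let $p$ be the smallest prime with $p > 2^{k-1}+1$. For natural numbers $q,\ell$ let $G_{q,\ell}$ denote the graph consisting of two vertices $s,t$ joined by $q$ internally disjoint paths, each of length $\ell$. Then $G_{q,2^{k-1}}$ is not $\mathbb{Z}_2^k$-connected for any odd $q$, and $G_{q,2^{k-1}}$ is $\mathbb{Z}_p$-connected whenever $q \geq p$.
   Context: Graphs are finite, may have multiple edges but no loops. $\mathbb{Z}_2^k$ denotes the direct product of $k$ copies of $\mathbb{Z}_2$. For an orientation $D$ of $G$ and a vertex $v$, $E^+(v)$ (resp. $E^-(v)$) is the set of edges directed out of (resp. into) $v$. For an Abelian group $\Gamma$, a graph $G$ is $\Gamma$-connected if for some (equivalently, any) orientation $D$ of $G$ and every function $\beta: V(G)\to\Gamma$ with $\sum_{v\in V(G)}\beta(v)=0$ there exists $f: E(G)\to\Gamma$ with $f(e)\neq 0$ for all edges $e$ and $\sum_{e\in E^+(v)} f(e)-\sum_{e\in E^-(v)} f(e)=\beta(v)$ for all $v\in V(G)$. *)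

theory Defs
  imports "HOL-Algebra.Algebra" "HOL-Computational_Algebra.Primes"
begin

text \<open>A finite multigraph without loops is given by a vertex set V, an edge set E and a map
  ends assigning to each edge its set of two distinct end vertices (parallel edges allowed).\<close>

definition orientation :: "'v set \<Rightarrow> 'e set \<Rightarrow> ('e \<Rightarrow> 'v set) \<Rightarrow> ('e \<Rightarrow> 'v \<times> 'v) \<Rightarrow> bool" where
  "orientation V E ends D \<longleftrightarrow>
     (\<forall>e\<in>E. fst (D e) \<in> V \<and> snd (D e) \<in> V \<and> fst (D e) \<noteq> snd (D e)
            \<and> {fst (D e), snd (D e)} = ends e)"

text \<open>Group connectivity for an abelian group Gamma (HOL-Algebra, written multiplicatively:
  the group operation plays the role of +, the unit the role of 0).\<close>

definition group_connected ::
  "('g, 'm) monoid_scheme \<Rightarrow> 'v set \<Rightarrow> 'e set \<Rightarrow> ('e \<Rightarrow> 'v set) \<Rightarrow> bool" where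
  "group_connected \<Gamma> V E ends \<longleftrightarrow>
     (\<exists>D. orientation V E ends D \<and>
        (\<forall>\<beta> \<in> V \<rightarrow>\<^sub>E carrier \<Gamma>. finprod \<Gamma> \<beta> V = \<one>\<^bsub>\<Gamma>\<^esub> \<longrightarrow>
           (\<exists>f \<in> E \<rightarrow>\<^sub>E carrier \<Gamma>. (\<forall>e\<in>E. f e \<noteq> \<one>\<^bsub>\<Gamma>\<^esub>) \<and>
              (\<forall>v\<in>V. finprod \<Gamma> f {e\<in>E. fst (D e) = v}
                       \<otimes>\<^bsub>\<Gamma>\<^esub> inv\<^bsub>\<Gamma>\<^esub> (finprod \<Gamma> f {e\<in>E. snd (D e) = v}) = \<beta> v))))"

text \<open>The graph G_{q,l}: vertices s, t and internal vertices Inner i j (path i, position j,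
  0 < j < l); edge (i,j) with i < q, j < l joins the j-th and (j+1)-th vertex of path i.\<close>

datatype pvert = S | T | Inner nat nat

definition path_vert :: "nat \<Rightarrow> nat \<Rightarrow> nat \<Rightarrow> pvert" where
  "path_vert l i j = (if j = 0 then S else if j = l then T else Inner i j)"

definition theta_V :: "nat \<Rightarrow> nat \<Rightarrow> pvert set" where
  "theta_V q l = {S, T} \<union> {Inner i j | i j. i < q \<and> 0 < j \<and> j < l}"

definition theta_E :: "nat \<Rightarrow> nat \<Rightarrow> (nat \<times> nat) set" where
  "theta_E q l = {(i, j). i < q \<and> j < l}"

definition theta_ends :: "nat \<Rightarrow> nat \<times> nat \<Rightarrow> pvert set" where
  "theta_ends l e = {path_vert l (fst e) (snd e), path_vert l (fst e) (Suc (snd e))}"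

definition Z2pow :: "nat \<Rightarrow> (nat \<Rightarrow> int) monoid" where
  "Z2pow k = product_group {..<k} (\<lambda>_. integer_mod_group 2)"

end

theory Submission
  imports Defs
begin


lemma carrier_Z2pow: "carrier (Z2pow k) = (\<Pi>\<^sub>E m\<in>{..<k}. {0..<2})"
  by (simp add: Z2pow_def carrier_integer_mod_group)

lemma one_Z2pow: "\<one>\<^bsub>Z2pow k\<^esub> = (\<lambda>m\<in>{..<k}. 0)"
  by (simp add: Z2pow_def)

lemma mult_Z2pow: "x \<otimes>\<^bsub>Z2pow k\<^esub> y = (\<lambda>m\<in>{..<k}. (x m + y m) mod 2)"
  by (simp add: Z2pow_def)

lemma inv_Z2pow: "x \<in> carrier (Z2pow k) \<Longrightarrow> inv\<^bsub>Z2pow k\<^esub> x = (\<lambda>m\<in>{..<k}. (- x m) mod 2)"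
proof -
  assume x: "x \<in> carrier (Z2pow k)"
  have "inv\<^bsub>Z2pow k\<^esub> x = (\<lambda>m\<in>{..<k}. inv\<^bsub>integer_mod_group 2\<^esub> x m)"
    unfolding Z2pow_def by (rule inv_product_group) (use x in \<open>auto simp: Z2pow_def\<close>)
  also have "\<dots> = (\<lambda>m\<in>{..<k}. (- x m) mod 2)"
    using x by (intro restrict_ext) (auto simp: carrier_Z2pow carrier_integer_mod_group PiE_iff)
  finally show ?thesis .
qed

lemma group_Z2pow: "group (Z2pow k)"
  unfolding Z2pow_def by (rule product_group) simp

lemma comm_Z2pow: "comm_group (Z2pow k)"
  by (rule group.group_comm_groupI[OF group_Z2pow]) (auto simp: mult_Z2pow add.commute)

lemma finprod_Z2pow:
  assumes "finite A" "f \<in> A \<rightarrow> carrier (Z2pow k)" "m < k"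
  shows "finprod (Z2pow k) f A m = (\<Sum>a\<in>A. f a m) mod 2"
  using assms
proof (induction A rule: finite_induct)
  case empty
  interpret comm_group "Z2pow k" by (rule comm_Z2pow)
  show ?case using empty by (simp add: one_Z2pow)
next
  case (insert x F)
  interpret comm_group "Z2pow k" by (rule comm_Z2pow)
  have "finprod (Z2pow k) f (insert x F) = f x \<otimes>\<^bsub>Z2pow k\<^esub> finprod (Z2pow k) f F"
    using insert by (auto intro: finprod_insert)
  then show ?case using insert by (simp add: mult_Z2pow mod_add_right_eq)
qed

lemma finprod_Zp:
  assumes "finite A" "f \<in> A \<rightarrow> carrier (integer_mod_group p)"
  shows "finprod (integer_mod_group p) f A = (\<Sum>a\<in>A. f a) mod int p"
  using assms
proof (induction A rule: finite_induct)
  case empty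
  interpret comm_group "integer_mod_group p" by simp
  show ?case by simp
next
  case (insert x F)
  interpret comm_group "integer_mod_group p" by simp
  have "finprod (integer_mod_group p) f (insert x F) = f x \<otimes>\<^bsub>integer_mod_group p\<^esub> finprod (integer_mod_group p) f F"
    using insert by (auto intro: finprod_insert)
  then show ?case using insert by (simp add: mod_add_right_eq)
qed


lemma theta_E_eq: "theta_E q L = {..<q} \<times> {..<L}"
  by (auto simp: theta_E_def)

lemma finite_theta_E: "finite (theta_E q L)"
  by (simp add: theta_E_eq)

lemma theta_V_eq: "theta_V q L = {S, T} \<union> (\<lambda>(i,j). Inner i j) ` ({..<q} \<times> {0<..<L})"
  by (auto simp: theta_V_def)

lemma finite_theta_V: "finite (theta_V q L)"
  by (simp add: theta_V_eq)

lemma path_vert_in: "i < q \<Longrightarrow> j \<le> L \<Longrightarrow> path_vert L i j \<in> theta_V q L"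
  by (auto simp: path_vert_def theta_V_def)

lemma inc_split1:
  assumes "orientation V E ends D"
  shows "{e\<in>E. fst (D e) = v} \<inter> {e\<in>E. snd (D e) = v} = {}"
  using assms unfolding orientation_def by auto

lemma inc_split2:
  assumes "orientation V E ends D"
  shows "{e\<in>E. fst (D e) = v} \<union> {e\<in>E. snd (D e) = v} = {e\<in>E. v \<in> ends e}"
  using assms unfolding orientation_def by (auto; metis insertCI insertE empty_iff)

lemma inc_Inner:
  assumes "i < q" "0 < j" "j < L"
  shows "{e\<in>theta_E q L. Inner i j \<in> theta_ends L e} = {(i, j - 1), (i, j)}"
  using assms by (auto simp: theta_E_def theta_ends_def path_vert_def split: if_splits)

lemma inc_S:
  assumes "0 < L"
  shows "{e\<in>theta_E q L. S \<in> theta_ends L e} = (\<lambda>i. (i, 0)) ` {..<q}"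
  using assms by (auto simp: theta_E_def theta_ends_def path_vert_def split: if_splits)

lemma inc_T:
  assumes "0 < L"
  shows "{e\<in>theta_E q L. T \<in> theta_ends L e} = (\<lambda>i. (i, L - 1)) ` {..<q}"
  using assms by (auto simp: theta_E_def theta_ends_def path_vert_def split: if_splits)

lemma mod2_aux: "((a::int) mod 2 + (- (b mod 2)) mod 2) mod 2 = (a + b) mod 2"
  by presburger

lemma bd_Z2pow:
  assumes "finite E" "f \<in> E \<rightarrow> carrier (Z2pow k)" "orientation V E ends D" "m < k"
  shows "(finprod (Z2pow k) f {e\<in>E. fst (D e) = v} \<otimes>\<^bsub>Z2pow k\<^esub>
            inv\<^bsub>Z2pow k\<^esub> (finprod (Z2pow k) f {e\<in>E. snd (D e) = v})) m
         = (\<Sum>e\<in>{e\<in>E. v \<in> ends e}. f e m) mod 2"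
proof -
  interpret comm_group "Z2pow k" by (rule comm_Z2pow)
  let ?O = "{e\<in>E. fst (D e) = v}" and ?I = "{e\<in>E. snd (D e) = v}"
  have fO: "finite ?O" and fI: "finite ?I" using assms(1) by auto
  have cI: "finprod (Z2pow k) f ?I \<in> carrier (Z2pow k)"
    using assms(2) by (intro finprod_closed) auto
  have "(finprod (Z2pow k) f ?O \<otimes>\<^bsub>Z2pow k\<^esub> inv\<^bsub>Z2pow k\<^esub> (finprod (Z2pow k) f ?I)) m
      = ((\<Sum>e\<in>?O. f e m) mod 2 + (- ((\<Sum>e\<in>?I. f e m) mod 2)) mod 2) mod 2"
    using assms fO fI cI
    by (simp add: mult_Z2pow inv_Z2pow finprod_Z2pow Pi_iff)
  also have "\<dots> = ((\<Sum>e\<in>?O. f e m) + (\<Sum>e\<in>?I. f e m)) mod 2"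
    by (rule mod2_aux)
  also have "(\<Sum>e\<in>?O. f e m) + (\<Sum>e\<in>?I. f e m) = (\<Sum>e\<in>?O \<union> ?I. f e m)"
    using fO fI inc_split1[OF assms(3)] by (simp add: sum.union_disjoint)
  also have "?O \<union> ?I = {e\<in>E. v \<in> ends e}"
    by (rule inc_split2[OF assms(3)])
  finally show ?thesis .
qed

lemma bits_exist: "\<exists>j::nat. j < 2^n \<and> (\<forall>m<n. bit j m = P m)"
proof (induction n arbitrary: P)
  case 0
  then show ?case by auto
next
  case (Suc n)
  obtain j :: nat where j: "j < 2^n" "\<forall>m<n. bit j m = P (Suc m)"
    using Suc[of "\<lambda>m. P (Suc m)"] by blast
  define j' where "j' = 2 * j + (if P 0 then 1 else 0)"
  have "j' < 2 ^ Suc n" using j(1) by (auto simp: j'_def)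
  moreover have "\<forall>m<Suc n. bit j' m = P m"
  proof (intro allI impI)
    fix m assume m: "m < Suc n"
    show "bit j' m = P m"
    proof (cases m)
      case 0
      then show ?thesis by (auto simp: j'_def bit_0)
    next
      case (Suc m')
      have "j' div 2 = j" by (auto simp: j'_def)
      then show ?thesis using j(2) m Suc by (simp add: bit_Suc)
    qed
  qed
  ultimately show ?case by blast
qed



lemma closure_all:
  fixes P :: int and R :: "int set" and d :: int
  assumes P: "P > 1" and RP: "R \<subseteq> {0..<P}" and R0: "0 \<in> R"
    and cl: "\<forall>r\<in>R. (r + d) mod P \<in> R" and cop: "u * d + v * P = 1"
  shows "R = {0..<P}"
proof
  show "R \<subseteq> {0..<P}" by (rule RP)
  have it: "(int m * d) mod P \<in> R" for m :: nat
  proof (induction m)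
    case 0 then show ?case using R0 by simp
  next
    case (Suc m)
    have "((int m * d) mod P + d) mod P \<in> R" using cl Suc by blast
    moreover have "((int m * d) mod P + d) mod P = (int (Suc m) * d) mod P"
      by (simp add: mod_add_left_eq mod_add_right_eq algebra_simps)
    ultimately show ?case by simp
  qed
  show "{0..<P} \<subseteq> R"
  proof
    fix t assume t: "t \<in> {0..<P}"
    define m where "m = nat ((t * u) mod P)"
    have im: "int m = (t * u) mod P" using P by (simp add: m_def)
    have "(int m * d) mod P = (t * u * d) mod P"
      by (simp add: im mod_mult_left_eq)
    also have "t * u * d = t - t * v * P"
    proof -
      have ud: "u * d = 1 - v * P" using cop by linarith
      have "t * u * d = t * (u * d)" by (simp only: mult.assoc)
      also have "\<dots> = t * (1 - v * P)" by (simp only: ud)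
      also have "\<dots> = t - t * v * P" by (simp add: algebra_simps)
      finally show ?thesis .
    qed
    also have "(t - t * v * P) mod P = t mod P"
    proof -
      have "P dvd (t - t * v * P) - t" by simp
      then show ?thesis by (simp only: mod_eq_dvd_iff)
    qed
    also have "\<dots> = t" using t by simp
    finally show "t \<in> R" using it[of m] by simp
  qed
qed


lemma subset_sums:
  fixes p :: nat and d :: "nat \<Rightarrow> int"
  assumes p: "Factorial_Ring.prime p" and d: "\<forall>i<n. \<not> int p dvd d i"
  shows "min p (n+1) \<le> card ((\<lambda>I. (\<Sum>i\<in>I. d i) mod int p) ` Pow {..<n})"
  using d
proof (induction n)
  case 0
  then show ?case by simp
next
  case (Suc n)
  define R where "R n = (\<lambda>I. (\<Sum>i\<in>I. d i) mod int p) ` Pow {..<n}" for n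
  have p1: "int p > 1" using p prime_gt_1_nat by simp
  have RP: "R m \<subseteq> {0..<int p}" for m using p1 by (auto simp: R_def)
  have fR: "finite (R m)" for m by (simp add: R_def)
  have R0: "0 \<in> R m" for m unfolding R_def by (rule image_eqI[of _ _ "{}"]) auto
  have sub: "R n \<subseteq> R (Suc n)" unfolding R_def by (rule image_mono) auto
  have shift: "(r + d n) mod int p \<in> R (Suc n)" if "r \<in> R n" for r
  proof -
    have "r \<in> (\<lambda>I. (\<Sum>i\<in>I. d i) mod int p) ` Pow {..<n}" using that by (simp add: R_def)
    then obtain I where I2: "r = (\<Sum>i\<in>I. d i) mod int p" and I1: "I \<in> Pow {..<n}" by (rule imageE)
    have I: "I \<subseteq> {..<n}" "r = (\<Sum>i\<in>I. d i) mod int p" using I1 I2 by auto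
    have nI: "n \<notin> I" using I(1) by auto
    have fI: "finite I" using I(1) finite_lessThan by (rule finite_subset)
    have e: "(\<Sum>i\<in>insert n I. d i) = (\<Sum>i\<in>I. d i) + d n" using nI fI by simp
    have "(r + d n) mod int p = ((\<Sum>i\<in>I. d i) + d n) mod int p"
      unfolding I(2) by (rule mod_add_left_eq)
    then have "(r + d n) mod int p = (\<Sum>i\<in>insert n I. d i) mod int p"
      by (simp only: e)
    moreover have "insert n I \<in> Pow {..<Suc n}" using I by auto
    ultimately show ?thesis unfolding R_def by (rule image_eqI)
  qed
  have IH: "min p (n+1) \<le> card (R n)" using Suc by (simp add: R_def)
  show ?case
  proof (cases "\<forall>r\<in>R n. (r + d n) mod int p \<in> R n")
    case True
    have "\<not> int p dvd d n" using Suc.prems by simp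
    then have "coprime (int p) (d n)"
      using p by (intro prime_imp_coprime) auto
    then have g: "gcd (d n) (int p) = 1" by (simp add: coprime_iff_gcd_eq_1 gcd.commute)
    obtain u v where "u * d n + v * int p = gcd (d n) (int p)" using bezout_int by blast
    then have cop: "u * d n + v * int p = 1" using g by simp
    have "R n = {0..<int p}" by (rule closure_all[OF p1 RP R0 True cop])
    then have "card (R n) = p" by simp
    moreover have "card (R n) \<le> card (R (Suc n))" using sub fR by (rule card_mono[rotated])
    ultimately show ?thesis by (simp add: R_def)
  next
    case False
    then obtain r where r: "r \<in> R n" "(r + d n) mod int p \<notin> R n" by blast
    have "insert ((r + d n) mod int p) (R n) \<subseteq> R (Suc n)" using sub shift[OF r(1)] by blast
    then have "card (insert ((r + d n) mod int p) (R n)) \<le> card (R (Suc n))"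
      using fR by (rule card_mono[rotated])
    then have "card (R n) + 1 \<le> card (R (Suc n))" using r(2) fR by simp
    then show ?thesis using IH by (simp add: R_def)
  qed
qed

lemma subset_sums_all:
  fixes p :: nat and d :: "nat \<Rightarrow> int"
  assumes p: "Factorial_Ring.prime p" and d: "\<forall>i<n. \<not> int p dvd d i" and n: "n + 1 \<ge> p"
  shows "\<exists>I\<subseteq>{..<n}. (\<Sum>i\<in>I. d i) mod int p = t mod int p"
proof -
  define R where "R = (\<lambda>I. (\<Sum>i\<in>I. d i) mod int p) ` Pow {..<n}"
  have p1: "int p > 1" using p prime_gt_1_nat by simp
  have RP: "R \<subseteq> {0..<int p}" using p1 by (auto simp: R_def)
  have "p \<le> card R" using subset_sums[OF p d] n by (simp add: R_def)
  then have "card {0..<int p} \<le> card R" by simp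
  moreover have "card R \<le> card {0..<int p}" using RP by (intro card_mono) auto
  ultimately have "R = {0..<int p}" using RP by (intro card_subset_eq) auto
  moreover have "t mod int p \<in> {0..<int p}" using p1 by simp
  ultimately have "t mod int p \<in> R" by simp
  then show ?thesis unfolding R_def by auto
qed



lemma part1:
  assumes k: "k \<ge> 1" and q: "odd q"
  shows "\<not> group_connected (Z2pow k) (theta_V q (2^(k-1))) (theta_E q (2^(k-1))) (theta_ends (2^(k-1)))"
proof
  define L where "L = (2::nat)^(k-1)"
  have L0: "0 < L" by (simp add: L_def)
  let ?Z = "Z2pow k"
  interpret Zg: comm_group "Z2pow k" by (rule comm_Z2pow)
  define bb :: "nat \<Rightarrow> nat \<Rightarrow> int" where
    "bb j m = (if m = 0 then 0 else if bit j (m-1) then 1 else 0)" for j m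
  define \<beta>0 where
    "\<beta>0 v = (\<lambda>m\<in>{..<k}. case v of Inner i j \<Rightarrow> (bb j m + bb (j-1) m) mod 2 | _ \<Rightarrow> 0)" for v
  define V where "V = theta_V q L"
  define E where "E = theta_E q L"
  define Xp where "Xp = finprod (Z2pow k) \<beta>0 (V - {T})"
  define \<beta> where "\<beta> = (\<lambda>v\<in>V. if v = T then inv\<^bsub>Z2pow k\<^esub> Xp else \<beta>0 v)"
  have \<beta>0c: "\<beta>0 v \<in> carrier (Z2pow k)" for v
    by (auto simp: \<beta>0_def carrier_Z2pow split: pvert.split)
  have Xpc: "Xp \<in> carrier (Z2pow k)"
    unfolding Xp_def by (rule Zg.finprod_closed) (simp add: \<beta>0c)
  have fV: "finite V" by (simp add: V_def finite_theta_V)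
  have TV: "T \<in> V" by (simp add: V_def theta_V_def)
  have SV: "S \<in> V" by (simp add: V_def theta_V_def)
  have \<beta>c: "\<beta> \<in> V \<rightarrow>\<^sub>E carrier (Z2pow k)"
    using \<beta>0c Xpc by (auto simp: \<beta>_def)
  have \<beta>sum: "finprod (Z2pow k) \<beta> V = \<one>\<^bsub>Z2pow k\<^esub>"
  proof -
    have "finprod (Z2pow k) \<beta> V = finprod (Z2pow k) \<beta> (insert T (V - {T}))"
      using TV by (simp add: insert_absorb)
    also have "\<dots> = \<beta> T \<otimes>\<^bsub>Z2pow k\<^esub> finprod (Z2pow k) \<beta> (V - {T})"
      by (rule Zg.finprod_insert) (use fV \<beta>c TV in \<open>auto simp: PiE_def Pi_def\<close>)
    also have "finprod (Z2pow k) \<beta> (V - {T}) = Xp"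
      unfolding Xp_def by (rule Zg.finprod_cong') (auto simp: \<beta>_def \<beta>0c)
    also have "\<beta> T = inv\<^bsub>Z2pow k\<^esub> Xp" using TV by (simp add: \<beta>_def)
    finally show ?thesis using Xpc by simp
  qed
  assume "group_connected ?Z (theta_V q (2^(k-1))) (theta_E q (2^(k-1))) (theta_ends (2^(k-1)))"
  then obtain D where D: "orientation V E (theta_ends L) D" and
    H: "\<forall>\<beta> \<in> V \<rightarrow>\<^sub>E carrier (Z2pow k). finprod (Z2pow k) \<beta> V = \<one>\<^bsub>Z2pow k\<^esub> \<longrightarrow>
           (\<exists>f \<in> E \<rightarrow>\<^sub>E carrier (Z2pow k). (\<forall>e\<in>E. f e \<noteq> \<one>\<^bsub>Z2pow k\<^esub>) \<and>
              (\<forall>v\<in>V. finprod (Z2pow k) f {e\<in>E. fst (D e) = v}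
                       \<otimes>\<^bsub>Z2pow k\<^esub> inv\<^bsub>Z2pow k\<^esub> (finprod (Z2pow k) f {e\<in>E. snd (D e) = v}) = \<beta> v))"
    unfolding group_connected_def V_def E_def L_def by blast
  from H \<beta>c \<beta>sum obtain f where fc: "f \<in> E \<rightarrow>\<^sub>E carrier (Z2pow k)" and fnz: "\<forall>e\<in>E. f e \<noteq> \<one>\<^bsub>Z2pow k\<^esub>"
    and cons: "\<forall>v\<in>V. finprod (Z2pow k) f {e\<in>E. fst (D e) = v}
                       \<otimes>\<^bsub>Z2pow k\<^esub> inv\<^bsub>Z2pow k\<^esub> (finprod (Z2pow k) f {e\<in>E. snd (D e) = v}) = \<beta> v"
    by blast
  have fc': "f \<in> E \<rightarrow> carrier (Z2pow k)" using fc by auto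
  have fval: "f e m = 0 \<or> f e m = 1" if "e \<in> E" "m < k" for e m
  proof -
    have "0 \<le> f e m \<and> f e m < 2" using fc that by (auto simp: carrier_Z2pow PiE_iff)
    then show ?thesis by auto
  qed
  have fE: "f e \<in> extensional {..<k}" if "e \<in> E" for e
    using fc that by (auto simp: carrier_Z2pow PiE_iff)
  have bd: "(\<Sum>e\<in>{e\<in>E. v \<in> theta_ends L e}. f e m) mod 2 = \<beta> v m" if "v \<in> V" "m < k" for v m
    using cons that bd_Z2pow[OF _ fc' D, of m v] by (simp add: E_def finite_theta_E)
  have inner: "(f (i,j-1) m + f (i,j) m) mod 2 = (bb j m + bb (j-1) m) mod 2"
    if "i < q" "0 < j" "j < L" "m < k" for i j m
  proof -
    have IV: "Inner i j \<in> V" using that by (auto simp: V_def theta_V_def)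
    have "\<beta> (Inner i j) m = (bb j m + bb (j-1) m) mod 2"
      using IV that by (simp add: \<beta>_def \<beta>0_def)
    moreover have "{e\<in>E. Inner i j \<in> theta_ends L e} = {(i, j - 1), (i, j)}"
      unfolding E_def using that(1-3) by (rule inc_Inner)
    moreover have "(i, j - 1) \<noteq> (i, j)" using that by simp
    ultimately show ?thesis using bd[OF IV that(4)] by simp
  qed
  have propj: "2 dvd (f (i,j) m - f (i,0) m - bb j m)" if "i < q" "j < L" "m < k" for i j m
    using that
  proof (induction j)
    case 0
    then show ?case by (simp add: bb_def)
  next
    case (Suc j)
    have IH: "2 dvd (f (i,j) m - f (i,0) m - bb j m)" using Suc by simp
    have "(f (i,Suc j - 1) m + f (i,Suc j) m) mod 2 = (bb (Suc j) m + bb (Suc j - 1) m) mod 2"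
      by (rule inner) (use Suc.prems in auto)
    then have "(f (i,j) m + f (i,Suc j) m) mod 2 = (bb (Suc j) m + bb j m) mod 2"
      by simp
    then have A: "2 dvd ((f (i,j) m + f (i,Suc j) m) - (bb (Suc j) m + bb j m))"
      by (simp only: mod_eq_dvd_iff)
    have "2 dvd (((f (i,j) m + f (i,Suc j) m) - (bb (Suc j) m + bb j m)) - (f (i,j) m - f (i,0) m - bb j m) - 2 * f (i,0) m)"
      by (intro dvd_diff A IH dvd_triv_left)
    moreover have "((f (i,j) m + f (i,Suc j) m) - (bb (Suc j) m + bb j m)) - (f (i,j) m - f (i,0) m - bb j m) - 2 * f (i,0) m
       = f (i,Suc j) m - f (i,0) m - bb (Suc j) m"
      by linarith
    ultimately show ?case by metis
  qed
  have first: "f (i,0) 0 = 1" if iq: "i < q" for i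
  proof (rule ccontr)
    assume "f (i,0) 0 \<noteq> 1"
    have e0: "(i,0) \<in> E" using iq L0 by (simp add: E_def theta_E_def)
    have f00: "f (i,0) 0 = 0" using fval[OF e0, of 0] k \<open>f (i,0) 0 \<noteq> 1\<close> by auto
    obtain j :: nat where j: "j < 2^(k-1)" "\<forall>n<k-1. bit j n = (f (i,0) (Suc n) = 1)"
      using bits_exist[of "k-1" "\<lambda>n. f (i,0) (Suc n) = 1"] by blast
    have bbj: "bb j m = f (i,0) m" if "m < k" for m
    proof (cases m)
      case 0 then show ?thesis using f00 by (simp add: bb_def)
    next
      case (Suc n)
      then have "n < k - 1" using that by simp
      then show ?thesis using j(2) fval[OF e0 that] Suc by (auto simp: bb_def)
    qed
    have ej: "(i,j) \<in> E" using iq j(1) by (simp add: E_def theta_E_def L_def)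
    have "f (i,j) m = 0" if "m < k" for m
    proof -
      have "j < L" using j(1) by (simp add: L_def)
      then have "2 dvd (f (i,j) m - f (i,0) m - bb j m)" using propj[OF iq _ that] by blast
      then have "2 dvd (f (i,j) m - f (i,0) m - bb j m + 2 * f (i,0) m)"
        by (rule dvd_add[OF _ dvd_triv_left])
      moreover have "f (i,j) m - f (i,0) m - bb j m + 2 * f (i,0) m = f (i,j) m"
        using bbj[OF that] by simp
      ultimately have "2 dvd f (i,j) m" by metis
      then show ?thesis using fval[OF ej that] by auto
    qed
    then have "f (i,j) = \<one>\<^bsub>Z2pow k\<^esub>"
      using fE[OF ej] by (auto simp: one_Z2pow extensional_def)
    then show False using fnz ej by blast
  qed
  have "(\<Sum>e\<in>{e\<in>E. S \<in> theta_ends L e}. f e 0) mod 2 = \<beta> S 0"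
    using bd[OF SV] k by simp
  moreover have "\<beta> S 0 = 0" using SV k by (simp add: \<beta>_def \<beta>0_def)
  moreover have "{e\<in>E. S \<in> theta_ends L e} = (\<lambda>i. (i, 0)) ` {..<q}"
    unfolding E_def using L0 by (rule inc_S)
  moreover have "(\<Sum>e\<in>(\<lambda>i. (i, 0::nat)) ` {..<q}. f e 0) = (\<Sum>i<q. f (i,0) 0)"
    by (subst sum.reindex) (auto simp: inj_on_def)
  moreover have "(\<Sum>i<q. f (i,0) 0) = int q" using first by simp
  ultimately have "int q mod 2 = 0" by simp
  then show False using q by presburger
qed



lemma modP_aux: "((a::int) mod P + (- (b mod P)) mod P) mod P = (a - b) mod P"
proof -
  have "((a::int) mod P + (- (b mod P)) mod P) mod P = (a + (- (b mod P))) mod P"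
    by (rule mod_add_eq)
  also have "a + (- (b mod P)) = a - b mod P" by simp
  also have "(a - b mod P) mod P = (a - b) mod P" by (rule mod_diff_right_eq)
  finally show ?thesis .
qed

lemma part2:
  fixes p q L :: nat
  assumes p: "Factorial_Ring.prime p" and pL: "p > L + 1" and L0: "0 < L" and q: "q \<ge> p"
  shows "group_connected (integer_mod_group p) (theta_V q L) (theta_E q L) (theta_ends L)"
proof -
  define P where "P = int p"
  have P1: "P > 1" using p prime_gt_1_nat by (simp add: P_def)
  have carP: "carrier (integer_mod_group p) = {0..<P}" using P1 by (simp add: carrier_integer_mod_group P_def)
  define V where "V = theta_V q L"
  define E where "E = theta_E q L"
  define D where "D e = (path_vert L (fst e) (snd e), path_vert L (fst e) (Suc (snd e)))" for e :: "nat \<times> nat"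
  have orient: "orientation V E (theta_ends L) D"
    unfolding orientation_def
  proof
    fix e assume e: "e \<in> E"
    then obtain i j where ij: "e = (i,j)" "i < q" "j < L" by (auto simp: E_def theta_E_def)
    show "fst (D e) \<in> V \<and> snd (D e) \<in> V \<and> fst (D e) \<noteq> snd (D e) \<and> {fst (D e), snd (D e)} = theta_ends L e"
      using ij by (auto simp: D_def V_def theta_V_def theta_ends_def path_vert_def)
  qed
  have fE: "finite E" by (simp add: E_def finite_theta_E)
  have fV: "finite V" by (simp add: V_def finite_theta_V)
  show ?thesis
    unfolding group_connected_def V_def[symmetric] E_def[symmetric]
  proof (intro exI[of _ D] conjI orient ballI impI)
    fix \<beta> assume \<beta>c: "\<beta> \<in> V \<rightarrow>\<^sub>E carrier (integer_mod_group p)"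
      and \<beta>s: "finprod (integer_mod_group p) \<beta> V = \<one>\<^bsub>integer_mod_group p\<^esub>"
    have \<beta>v: "\<beta> v \<in> {0..<P}" if "v \<in> V" for v using \<beta>c that carP by auto
    have \<beta>sum: "(\<Sum>v\<in>V. \<beta> v) mod P = 0"
      using \<beta>s finprod_Zp[OF fV, of \<beta> p] \<beta>c by (auto simp: P_def)
    show "\<exists>f \<in> E \<rightarrow>\<^sub>E carrier (integer_mod_group p). (\<forall>e\<in>E. f e \<noteq> \<one>\<^bsub>integer_mod_group p\<^esub>) \<and>
              (\<forall>v\<in>V. finprod (integer_mod_group p) f {e\<in>E. fst (D e) = v}
                       \<otimes>\<^bsub>integer_mod_group p\<^esub> inv\<^bsub>integer_mod_group p\<^esub> (finprod (integer_mod_group p) f {e\<in>E. snd (D e) = v}) = \<beta> v)"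
    proof -
    define c where "c i j = (\<Sum>m\<in>{1..j}. \<beta> (Inner i m))" for i j
    define Xs where "Xs i = {a \<in> {0..<P}. \<forall>j<L. (a + c i j) mod P \<noteq> 0}" for i
    have Xseq: "Xs i = {0..<P} - (\<lambda>j. (- c i j) mod P) ` {..<L}" for i
    proof -
      have "(a + c i j) mod P = 0 \<longleftrightarrow> a = (- c i j) mod P" if "a \<in> {0..<P}" for a j
      proof
        assume "(a + c i j) mod P = 0"
        then have "(a + c i j - c i j) mod P = (0 - c i j) mod P" by (metis mod_diff_left_eq)
        then show "a = (- c i j) mod P" using that by simp
      next
        assume "a = (- c i j) mod P"
        then show "(a + c i j) mod P = 0" by (simp add: mod_add_left_eq)
      qed
      note eq = this
      have mem: "a \<in> Xs i \<longleftrightarrow> a \<in> {0..<P} - (\<lambda>j. (- c i j) mod P) ` {..<L}" for a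
      proof -
        have m1: "a \<in> Xs i \<longleftrightarrow> a \<in> {0..<P} \<and> (\<forall>j<L. (a + c i j) mod P \<noteq> 0)"
          by (simp only: Xs_def mem_Collect_eq)
        have m2: "a \<in> {0..<P} - (\<lambda>j. (- c i j) mod P) ` {..<L} \<longleftrightarrow> a \<in> {0..<P} \<and> (\<forall>j<L. a \<noteq> (- c i j) mod P)"
          by auto
        show ?thesis
        proof (cases "a \<in> {0..<P}")
          case True
          have "(\<forall>j<L. (a + c i j) mod P \<noteq> 0) \<longleftrightarrow> (\<forall>j<L. a \<noteq> (- c i j) mod P)"
            by (simp only: eq[OF True])
          then show ?thesis by (simp only: m1 m2 True simp_thms)
        next
          case False
          then show ?thesis by (simp only: m1 m2 False simp_thms)
        qed
      qed
      show ?thesis by (rule Set.set_eqI) (rule mem)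
    qed
    have cardXs: "card (Xs i) \<ge> 2" for i
    proof -
      have "card ((\<lambda>j. (- c i j) mod P) ` {..<L}) \<le> L"
        using card_image_le[of "{..<L}"] by simp
      moreover have "card {0..<P} - card ((\<lambda>j. (- c i j) mod P) ` {..<L}) \<le> card (Xs i)"
        unfolding Xseq by (rule diff_card_le_card_Diff) simp
      moreover have "card {0..<P} = p" by (simp add: P_def)
      ultimately show ?thesis using pL by linarith
    qed
    have fXs: "finite (Xs i)" for i by (simp add: Xseq)
    have two: "\<exists>x y. x \<in> Xs i \<and> y \<in> Xs i \<and> x \<noteq> y" for i
    proof -
      have "Xs i \<noteq> {}" using cardXs[of i] by auto
      then obtain x where x: "x \<in> Xs i" by blast
      have "card (Xs i - {x}) \<ge> 1" using cardXs[of i] x fXs by simp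
      then have "Xs i - {x} \<noteq> {}" by (metis card.empty not_one_le_zero)
      then show ?thesis using x by blast
    qed
    define xf where "xf i = (SOME x. \<exists>y. x \<in> Xs i \<and> y \<in> Xs i \<and> x \<noteq> y)" for i
    define yf where "yf i = (SOME y. xf i \<in> Xs i \<and> y \<in> Xs i \<and> xf i \<noteq> y)" for i
    have xy: "xf i \<in> Xs i \<and> yf i \<in> Xs i \<and> xf i \<noteq> yf i" for i
    proof -
      have "\<exists>y. xf i \<in> Xs i \<and> y \<in> Xs i \<and> xf i \<noteq> y"
        unfolding xf_def by (rule someI_ex) (use two[of i] in blast)
      then show ?thesis unfolding yf_def by (rule someI_ex)
    qed
    define dd where "dd i = yf i - xf i" for i
    have ddn: "\<not> int p dvd dd i" for i
    proof
      assume "int p dvd dd i"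
      then have "yf i mod P = xf i mod P" by (simp add: dd_def P_def mod_eq_dvd_iff)
      moreover have "xf i \<in> {0..<P}" "yf i \<in> {0..<P}" using xy[of i] by (auto simp: Xs_def)
      ultimately show False using xy[of i] by simp
    qed
    obtain I where I: "I \<subseteq> {..<q}" "(\<Sum>i\<in>I. dd i) mod P = (\<beta> S - (\<Sum>i<q. xf i)) mod P"
      using subset_sums_all[OF p, of q dd "\<beta> S - (\<Sum>i<q. xf i)"] ddn q by (auto simp: P_def)
    define a where "a i = (if i \<in> I then yf i else xf i)" for i
    have aX: "a i \<in> Xs i" for i using xy by (simp add: a_def)
    have aP: "a i \<in> {0..<P}" for i using aX by (simp add: Xs_def)
    have anz: "(a i + c i j) mod P \<noteq> 0" if "j < L" for i j using aX that by (simp add: Xs_def)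
    have asum: "(\<Sum>i<q. a i) mod P = \<beta> S"
    proof -
      have "(\<Sum>i<q. a i) = (\<Sum>i<q. xf i + (if i \<in> I then dd i else 0))"
        by (rule sum.cong) (auto simp: a_def dd_def)
      also have "\<dots> = (\<Sum>i<q. xf i) + (\<Sum>i\<in>I. dd i)"
        using I(1) by (simp add: sum.distrib sum.If_cases Int_absorb1)
      finally have "(\<Sum>i<q. a i) mod P = ((\<Sum>i<q. xf i) + (\<Sum>i\<in>I. dd i) mod P) mod P"
        by (simp add: mod_add_right_eq)
      also have "\<dots> = \<beta> S mod P" using I(2) by (simp add: mod_add_right_eq)
      also have "\<dots> = \<beta> S" using \<beta>v[of S] by (simp add: V_def theta_V_def)
      finally show ?thesis .
    qed
    define f where "f = (\<lambda>e\<in>E. (a (fst e) + c (fst e) (snd e)) mod P)"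
    have fc: "f \<in> E \<rightarrow>\<^sub>E carrier (integer_mod_group p)"
      using P1 by (auto simp: f_def carP)
    have fnz: "\<forall>e\<in>E. f e \<noteq> \<one>\<^bsub>integer_mod_group p\<^esub>"
      by (auto simp: f_def E_def theta_E_def anz)
    have bd: "finprod (integer_mod_group p) f {e\<in>E. fst (D e) = v}
               \<otimes>\<^bsub>integer_mod_group p\<^esub> inv\<^bsub>integer_mod_group p\<^esub> (finprod (integer_mod_group p) f {e\<in>E. snd (D e) = v})
             = ((\<Sum>e\<in>{e\<in>E. fst (D e) = v}. f e) - (\<Sum>e\<in>{e\<in>E. snd (D e) = v}. f e)) mod P" for v
    proof -
      have c1: "f \<in> {e\<in>E. fst (D e) = v} \<rightarrow> carrier (integer_mod_group p)"
        and c2: "f \<in> {e\<in>E. snd (D e) = v} \<rightarrow> carrier (integer_mod_group p)" using fc by auto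
      have "(\<Sum>e\<in>{e\<in>E. snd (D e) = v}. f e) mod int p \<in> carrier (integer_mod_group p)"
        using P1 by (simp add: carP P_def)
      moreover have "finprod (integer_mod_group p) f {e\<in>E. fst (D e) = v} = (\<Sum>e\<in>{e\<in>E. fst (D e) = v}. f e) mod int p"
        using fE by (intro finprod_Zp c1) simp
      moreover have "finprod (integer_mod_group p) f {e\<in>E. snd (D e) = v} = (\<Sum>e\<in>{e\<in>E. snd (D e) = v}. f e) mod int p"
        using fE by (intro finprod_Zp c2) simp
      ultimately have "finprod (integer_mod_group p) f {e\<in>E. fst (D e) = v}
               \<otimes>\<^bsub>integer_mod_group p\<^esub> inv\<^bsub>integer_mod_group p\<^esub> (finprod (integer_mod_group p) f {e\<in>E. snd (D e) = v})
           = ((\<Sum>e\<in>{e\<in>E. fst (D e) = v}. f e) mod P + (- ((\<Sum>e\<in>{e\<in>E. snd (D e) = v}. f e) mod P)) mod P) mod P"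
        by (simp only: inv_integer_mod_group mult_integer_mod_group P_def)
      also have "\<dots> = ((\<Sum>e\<in>{e\<in>E. fst (D e) = v}. f e) - (\<Sum>e\<in>{e\<in>E. snd (D e) = v}. f e)) mod P"
        by (rule modP_aux)
      finally show ?thesis .
    qed
    have fv: "f (i,j) = (a i + c i j) mod P" if "i < q" "j < L" for i j
      using that by (simp add: f_def E_def theta_E_def)
    have OS: "{e\<in>E. fst (D e) = S} = (\<lambda>i. (i,0)) ` {..<q}"
      using L0 by (auto simp: D_def E_def theta_E_def path_vert_def split: if_splits)
    have IS: "{e\<in>E. snd (D e) = S} = {}"
      by (auto simp: D_def E_def theta_E_def path_vert_def split: if_splits)
    have OT: "{e\<in>E. fst (D e) = T} = {}"
      by (auto simp: D_def E_def theta_E_def path_vert_def split: if_splits)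
    have IT: "{e\<in>E. snd (D e) = T} = (\<lambda>i. (i,L-1)) ` {..<q}"
      using L0 by (auto simp: D_def E_def theta_E_def path_vert_def split: if_splits)
    have OI: "{e\<in>E. fst (D e) = Inner i j} = {(i,j)}" if "i < q" "0 < j" "j < L" for i j
      using that by (auto simp: D_def E_def theta_E_def path_vert_def split: if_splits)
    have II: "{e\<in>E. snd (D e) = Inner i j} = {(i,j-1)}" if "i < q" "0 < j" "j < L" for i j
      using that by (auto simp: D_def E_def theta_E_def path_vert_def split: if_splits)
    have c0: "c i 0 = 0" for i by (simp add: c_def)
    have cS: "c i (Suc j) = c i j + \<beta> (Inner i (Suc j))" for i j
      by (simp add: c_def)
    have aP': "a i mod P = a i" for i using aP[of i] by simp
    have bdS: "((\<Sum>e\<in>{e\<in>E. fst (D e) = S}. f e) - (\<Sum>e\<in>{e\<in>E. snd (D e) = S}. f e)) mod P = \<beta> S"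
    proof -
      have "(\<Sum>e\<in>{e\<in>E. fst (D e) = S}. f e) = (\<Sum>i<q. f (i,0))"
        unfolding OS by (subst sum.reindex) (auto simp: inj_on_def)
      also have "\<dots> = (\<Sum>i<q. a i)"
        by (rule sum.cong) (simp_all add: fv L0 c0 aP')
      finally show ?thesis using asum by (simp add: IS)
    qed
    have bdI: "((\<Sum>e\<in>{e\<in>E. fst (D e) = Inner i j}. f e) - (\<Sum>e\<in>{e\<in>E. snd (D e) = Inner i j}. f e)) mod P = \<beta> (Inner i j)"
      if ij: "i < q" "0 < j" "j < L" for i j
    proof -
      obtain j' where j': "j = Suc j'" using ij(2) gr0_implies_Suc by blast
      have "((\<Sum>e\<in>{e\<in>E. fst (D e) = Inner i j}. f e) - (\<Sum>e\<in>{e\<in>E. snd (D e) = Inner i j}. f e)) mod P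
          = ((a i + c i j) mod P - (a i + c i j') mod P) mod P"
        using ij by (simp add: OI II fv j')
      also have "\<dots> = ((a i + c i j) - (a i + c i j')) mod P" by (rule mod_diff_eq)
      also have "(a i + c i j) - (a i + c i j') = \<beta> (Inner i j)" by (simp add: j' cS)
      also have "\<beta> (Inner i j) mod P = \<beta> (Inner i j)"
        using \<beta>v[of "Inner i j"] ij by (simp add: V_def theta_V_def)
      finally show ?thesis .
    qed
    have bdT: "((\<Sum>e\<in>{e\<in>E. fst (D e) = T}. f e) - (\<Sum>e\<in>{e\<in>E. snd (D e) = T}. f e)) mod P = \<beta> T"
    proof -
      define Inn where "Inn = (\<lambda>(i,j). Inner i j) ` ({..<q} \<times> {0<..<L})"
      have Veq: "V = insert S (insert T Inn)" by (auto simp: V_def theta_V_eq Inn_def)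
      have fInn: "finite Inn" by (simp add: Inn_def)
      have "(\<Sum>v\<in>V. \<beta> v) = \<beta> S + (\<beta> T + (\<Sum>v\<in>Inn. \<beta> v))"
      proof -
        have "S \<notin> Inn" "T \<notin> Inn" by (auto simp: Inn_def)
        then show ?thesis unfolding Veq using fInn by simp
      qed
      moreover have "(\<Sum>v\<in>Inn. \<beta> v) = (\<Sum>(i,j)\<in>{..<q} \<times> {0<..<L}. \<beta> (Inner i j))"
        unfolding Inn_def by (subst sum.reindex) (auto simp: inj_on_def case_prod_beta)
      moreover have "\<dots> = (\<Sum>i<q. c i (L-1))"
        unfolding sum.cartesian_product[symmetric] c_def
      proof (rule sum.cong)
        fix i show "(\<Sum>j\<in>{0<..<L}. \<beta> (Inner i j)) = (\<Sum>m\<in>{1..L-1}. \<beta> (Inner i m))"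
          using L0 by (intro sum.cong) auto
      qed simp
      ultimately have Vs: "(\<Sum>v\<in>V. \<beta> v) = \<beta> S + \<beta> T + (\<Sum>i<q. c i (L-1))" by simp
      have "(\<Sum>e\<in>{e\<in>E. snd (D e) = T}. f e) = (\<Sum>i<q. f (i,L-1))"
        unfolding IT by (subst sum.reindex) (auto simp: inj_on_def)
      also have "\<dots> = (\<Sum>i<q. (a i + c i (L-1)) mod P)"
        by (rule sum.cong) (use L0 in \<open>simp_all add: fv\<close>)
      finally have "((\<Sum>e\<in>{e\<in>E. fst (D e) = T}. f e) - (\<Sum>e\<in>{e\<in>E. snd (D e) = T}. f e)) mod P
          = (0 - (\<Sum>i<q. (a i + c i (L-1)) mod P)) mod P" by (simp add: OT)
      also have "\<dots> = (0 - (\<Sum>i<q. (a i + c i (L-1)) mod P) mod P) mod P"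
        by (rule mod_diff_right_eq[symmetric])
      also have "(\<Sum>i<q. (a i + c i (L-1)) mod P) mod P = (\<Sum>i<q. (a i + c i (L-1))) mod P"
        by (rule mod_sum_eq)
      also have "(0 - (\<Sum>i<q. (a i + c i (L-1))) mod P) mod P = (0 - (\<Sum>i<q. (a i + c i (L-1)))) mod P"
        by (rule mod_diff_right_eq)
      also have "\<dots> = \<beta> T mod P"
      proof -
        have d1: "P dvd (\<Sum>i<q. a i) - \<beta> S" using asum by (metis mod_mod_trivial mod_eq_dvd_iff)
        have d2: "P dvd (\<Sum>v\<in>V. \<beta> v)" using \<beta>sum by auto
        have "(0 - (\<Sum>i<q. (a i + c i (L-1)))) - \<beta> T = - (((\<Sum>i<q. a i) - \<beta> S) + (\<Sum>v\<in>V. \<beta> v))"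
          by (simp add: Vs sum.distrib)
        moreover have "P dvd - (((\<Sum>i<q. a i) - \<beta> S) + (\<Sum>v\<in>V. \<beta> v))"
          using d1 d2 by (simp only: dvd_minus_iff dvd_add)
        ultimately show ?thesis by (simp only: mod_eq_dvd_iff)
      qed
      also have "\<beta> T mod P = \<beta> T" using \<beta>v[of T] by (simp add: V_def theta_V_def)
      finally show ?thesis .
    qed
    show ?thesis
    proof (rule bexI[of _ f], intro conjI ballI)
      show "f \<in> E \<rightarrow>\<^sub>E carrier (integer_mod_group p)" by (rule fc)
    next
      fix e assume "e \<in> E" then show "f e \<noteq> \<one>\<^bsub>integer_mod_group p\<^esub>" using fnz by blast
    next
      fix v assume v: "v \<in> V"
      show "finprod (integer_mod_group p) f {e\<in>E. fst (D e) = v}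
               \<otimes>\<^bsub>integer_mod_group p\<^esub> inv\<^bsub>integer_mod_group p\<^esub> (finprod (integer_mod_group p) f {e\<in>E. snd (D e) = v}) = \<beta> v"
        unfolding bd
      proof -
        consider "v = S" | "v = T" | i j where "v = Inner i j" "i < q" "0 < j" "j < L"
          using v by (auto simp: V_def theta_V_def)
        then show "((\<Sum>e\<in>{e\<in>E. fst (D e) = v}. f e) - (\<Sum>e\<in>{e\<in>E. snd (D e) = v}. f e)) mod P = \<beta> v"
        proof cases
          case 1 then show ?thesis using bdS by simp
        next
          case 2 then show ?thesis using bdT by simp
        next
          case 3 then show ?thesis using bdI by simp
        qed
      qed
    qed
    qed
  qed
qed


theorem theorem3p2:
  fixes k p :: nat
  assumes "k \<ge> 1"
    and "Factorial_Ring.prime p" and "p > 2 ^ (k - 1) + 1"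
    and "\<forall>r::nat. Factorial_Ring.prime r \<and> r > 2 ^ (k - 1) + 1 \<longrightarrow> p \<le> r"
  shows "(\<forall>q::nat. odd q \<longrightarrow>
            \<not> group_connected (Z2pow k) (theta_V q (2 ^ (k - 1))) (theta_E q (2 ^ (k - 1)))
                (theta_ends (2 ^ (k - 1))))
       \<and> (\<forall>q::nat. q \<ge> p \<longrightarrow>
            group_connected (integer_mod_group p) (theta_V q (2 ^ (k - 1))) (theta_E q (2 ^ (k - 1)))
                (theta_ends (2 ^ (k - 1))))"
proof (intro conjI allI impI)
  fix q :: nat assume "odd q"
  then show "\<not> group_connected (Z2pow k) (theta_V q (2 ^ (k - 1))) (theta_E q (2 ^ (k - 1)))
                (theta_ends (2 ^ (k - 1)))"
    by (rule part1[OF assms(1)])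
next
  fix q :: nat assume q: "q \<ge> p"
  have L0: "0 < (2::nat) ^ (k - 1)" by simp
  show "group_connected (integer_mod_group p) (theta_V q (2 ^ (k - 1))) (theta_E q (2 ^ (k - 1)))
                (theta_ends (2 ^ (k - 1)))"
    by (rule part2[OF assms(2) assms(3) L0 q])
qed

end
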